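(* Let $R$ be a ring. Then $R$ is feckly clean if and only if for any disjoint compact subsets $A,B$ of $\operatorname{Max}(R)$ there exists $e\in R$ such that $A\subseteq V(e)$, $B\subseteq V(1-e)$ and $eR(1-e)\subseteq J(R)$.
   Context: Rings are associative with identity, not necessarily commutative; $J(R)$ is the Jacobson radical. An element $u\in R$ is full if $RuR=R$. An element $a\in R$ is feckly clean if there exist $e\in R$ and a full element $u\in R$ with $a=e+u$ and $eR(1-e)\subseteq J(R)$; $R$ is feckly clean if every element is feckly clean. $\operatorname{Max}(R)$ is the set of all maximal (two-sided) ideals of $R$, topologized so that the closed sets are exactly the sets $V(I)=\{P\in\operatorname{Max}(R): I\subseteq P\}$ for ideals $I$ of $R$. For $a\in R$, $V(a)=V(RaR)$. *)

theory Defs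
  imports "HOL-Analysis.Analysis"
begin

definition two_sided_ideal :: "'a::ring_1 set \<Rightarrow> bool" where
  "two_sided_ideal I \<longleftrightarrow> 0 \<in> I \<and> (\<forall>x\<in>I. \<forall>y\<in>I. x + y \<in> I) \<and> (\<forall>x\<in>I. - x \<in> I)
     \<and> (\<forall>x\<in>I. \<forall>r. r * x \<in> I \<and> x * r \<in> I)"

definition left_ideal :: "'a::ring_1 set \<Rightarrow> bool" where
  "left_ideal I \<longleftrightarrow> 0 \<in> I \<and> (\<forall>x\<in>I. \<forall>y\<in>I. x + y \<in> I) \<and> (\<forall>x\<in>I. - x \<in> I)
     \<and> (\<forall>x\<in>I. \<forall>r. r * x \<in> I)"

definition maximal_left_ideal :: "'a::ring_1 set \<Rightarrow> bool" where
  "maximal_left_ideal M \<longleftrightarrow> left_ideal M \<and> M \<noteq> UNIV \<and>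
     (\<forall>I. left_ideal I \<and> M \<subseteq> I \<and> I \<noteq> UNIV \<longrightarrow> I = M)"

definition jacobson :: "'a::ring_1 set" where
  "jacobson = \<Inter>{M. maximal_left_ideal M}"

definition maximal_ideal :: "'a::ring_1 set \<Rightarrow> bool" where
  "maximal_ideal M \<longleftrightarrow> two_sided_ideal M \<and> M \<noteq> UNIV \<and>
     (\<forall>I. two_sided_ideal I \<and> M \<subseteq> I \<and> I \<noteq> UNIV \<longrightarrow> I = M)"

definition MaxSpec :: "'a::ring_1 set set" where
  "MaxSpec = {M. maximal_ideal M}"

definition RaR :: "'a::ring_1 \<Rightarrow> 'a set" where
  "RaR a = {x. \<exists>(n::nat) r s. x = (\<Sum>i<n. r i * a * s i)}"

definition full :: "'a::ring_1 \<Rightarrow> bool" where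
  "full u \<longleftrightarrow> RaR u = UNIV"

definition V :: "'a::ring_1 set \<Rightarrow> 'a set set" where
  "V I = {P \<in> MaxSpec. I \<subseteq> P}"

definition Velem :: "'a::ring_1 \<Rightarrow> 'a set set" where
  "Velem a = V (RaR a)"

text \<open>Topology on Max(R) whose closed sets are exactly the sets V(I), I an ideal;
  given via its open sets Max(R) - V(I).\<close>
definition max_topology :: "'a::ring_1 set topology" where
  "max_topology = topology_generated_by {MaxSpec - V I | I. two_sided_ideal I}"

definition feckly_clean_elem :: "'a::ring_1 \<Rightarrow> bool" where
  "feckly_clean_elem a \<longleftrightarrow> (\<exists>e u. full u \<and> a = e + u \<and>
      {e * r * (1 - e) | r. True} \<subseteq> jacobson)"

definition feckly_clean_ring :: "'a::ring_1 itself \<Rightarrow> bool" where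
  "feckly_clean_ring _ \<longleftrightarrow> (\<forall>a::'a. feckly_clean_elem a)"

end

theory Submission
  imports Defs
begin


lemma tsi_mult: "two_sided_ideal I \<Longrightarrow> x \<in> I \<Longrightarrow> r * x \<in> I \<and> x * r \<in> I"
  unfolding two_sided_ideal_def by blast
lemma tsi_lmult: "two_sided_ideal I \<Longrightarrow> x \<in> I \<Longrightarrow> r * x \<in> I"
  unfolding two_sided_ideal_def by blast
lemma tsi_rmult: "two_sided_ideal I \<Longrightarrow> x \<in> I \<Longrightarrow> x * r \<in> I"
  unfolding two_sided_ideal_def by blast
lemma tsi_add: "two_sided_ideal I \<Longrightarrow> x \<in> I \<Longrightarrow> y \<in> I \<Longrightarrow> x + y \<in> I"
  unfolding two_sided_ideal_def by blast
lemma tsi_neg: "two_sided_ideal I \<Longrightarrow> x \<in> I \<Longrightarrow> - x \<in> I"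
  unfolding two_sided_ideal_def by blast
lemma tsi_0: "two_sided_ideal I \<Longrightarrow> 0 \<in> I"
  unfolding two_sided_ideal_def by blast
lemma tsi_diff: "two_sided_ideal I \<Longrightarrow> x \<in> I \<Longrightarrow> y \<in> I \<Longrightarrow> x - y \<in> I"
  using tsi_add[of I x "-y"] tsi_neg[of I y] by simp
lemma tsi_UNIV: "two_sided_ideal I \<Longrightarrow> 1 \<in> I \<Longrightarrow> I = UNIV"
  using tsi_mult[of I 1] by auto

lemma li_mult: "left_ideal I \<Longrightarrow> x \<in> I \<Longrightarrow> r * x \<in> I"
  unfolding left_ideal_def by blast
lemma li_add: "left_ideal I \<Longrightarrow> x \<in> I \<Longrightarrow> y \<in> I \<Longrightarrow> x + y \<in> I"
  unfolding left_ideal_def by blast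
lemma li_neg: "left_ideal I \<Longrightarrow> x \<in> I \<Longrightarrow> - x \<in> I"
  unfolding left_ideal_def by blast
lemma li_0: "left_ideal I \<Longrightarrow> 0 \<in> I"
  unfolding left_ideal_def by blast
lemma li_UNIV: "left_ideal I \<Longrightarrow> 1 \<in> I \<Longrightarrow> I = UNIV"
  using li_mult[of I 1] by auto

lemma exists_maximal_ideal:
  fixes I :: "'a::ring_1 set"
  assumes "two_sided_ideal I" "1 \<notin> I"
  shows "\<exists>P. maximal_ideal P \<and> I \<subseteq> P"
proof -
  let ?A = "{K::'a set. two_sided_ideal K \<and> I \<subseteq> K \<and> 1 \<notin> K}"
  have "\<exists>M\<in>?A. \<forall>X\<in>?A. M \<subseteq> X \<longrightarrow> X = M"
  proof (rule subset_Zorn_nonempty)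
    show "?A \<noteq> {}" using assms by blast
    fix C assume C: "C \<noteq> {}" "subset.chain ?A C"
    hence ch: "C \<subseteq> ?A" "\<forall>X\<in>C. \<forall>Y\<in>C. X \<subseteq> Y \<or> Y \<subseteq> X" by (auto simp: subset_chain_def)
    have "two_sided_ideal (\<Union>C)"
      unfolding two_sided_ideal_def
    proof (intro conjI ballI allI)
      show "0 \<in> \<Union>C" using C(1) ch(1) tsi_0 by blast
    next
      fix x y assume "x \<in> \<Union>C" "y \<in> \<Union>C"
      then obtain X Y where XY: "X \<in> C" "Y \<in> C" "x \<in> X" "y \<in> Y" by blast
      show "x + y \<in> \<Union>C"
      proof (cases "X \<subseteq> Y")
        case True thus ?thesis using XY ch tsi_add[of Y x y] by blast
      next
        case False hence "Y \<subseteq> X" using ch XY by blast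
        thus ?thesis using XY ch tsi_add[of X x y] by blast
      qed
    next
      fix x assume "x \<in> \<Union>C" thus "- x \<in> \<Union>C" using ch tsi_neg by blast
    next
      fix x r assume "x \<in> \<Union>C" thus "r * x \<in> \<Union>C" "x * r \<in> \<Union>C" using ch tsi_mult by blast+
    qed
    thus "\<Union>C \<in> ?A" using C ch by auto
  qed
  then obtain M where M: "M \<in> ?A" "\<forall>X\<in>?A. M \<subseteq> X \<longrightarrow> X = M" by blast
  have "maximal_ideal M"
    unfolding maximal_ideal_def
  proof (intro conjI allI impI)
    show "two_sided_ideal M" "M \<noteq> UNIV" using M by auto
    fix K assume K: "two_sided_ideal K \<and> M \<subseteq> K \<and> K \<noteq> UNIV"
    hence "1 \<notin> K" using tsi_UNIV by blast
    thus "K = M" using M K by blast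
  qed
  thus ?thesis using M by blast
qed

lemma exists_maximal_left_ideal:
  fixes I :: "'a::ring_1 set"
  assumes "left_ideal I" "1 \<notin> I"
  shows "\<exists>P. maximal_left_ideal P \<and> I \<subseteq> P"
proof -
  let ?A = "{K::'a set. left_ideal K \<and> I \<subseteq> K \<and> 1 \<notin> K}"
  have "\<exists>M\<in>?A. \<forall>X\<in>?A. M \<subseteq> X \<longrightarrow> X = M"
  proof (rule subset_Zorn_nonempty)
    show "?A \<noteq> {}" using assms by blast
    fix C assume C: "C \<noteq> {}" "subset.chain ?A C"
    hence ch: "C \<subseteq> ?A" "\<forall>X\<in>C. \<forall>Y\<in>C. X \<subseteq> Y \<or> Y \<subseteq> X" by (auto simp: subset_chain_def)
    have "left_ideal (\<Union>C)"
      unfolding left_ideal_def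
    proof (intro conjI ballI allI)
      show "0 \<in> \<Union>C" using C(1) ch(1) li_0 by blast
    next
      fix x y assume "x \<in> \<Union>C" "y \<in> \<Union>C"
      then obtain X Y where XY: "X \<in> C" "Y \<in> C" "x \<in> X" "y \<in> Y" by blast
      show "x + y \<in> \<Union>C"
      proof (cases "X \<subseteq> Y")
        case True thus ?thesis using XY ch li_add[of Y x y] by blast
      next
        case False hence "Y \<subseteq> X" using ch XY by blast
        thus ?thesis using XY ch li_add[of X x y] by blast
      qed
    next
      fix x assume "x \<in> \<Union>C" thus "- x \<in> \<Union>C" using ch li_neg by blast
    next
      fix x r assume "x \<in> \<Union>C" thus "r * x \<in> \<Union>C" using ch li_mult by blast
    qed
    thus "\<Union>C \<in> ?A" using C ch by auto
  qed
  then obtain M where M: "M \<in> ?A" "\<forall>X\<in>?A. M \<subseteq> X \<longrightarrow> X = M" by blast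
  have "maximal_left_ideal M"
    unfolding maximal_left_ideal_def
  proof (intro conjI allI impI)
    show "left_ideal M" "M \<noteq> UNIV" using M by auto
    fix K assume K: "left_ideal K \<and> M \<subseteq> K \<and> K \<noteq> UNIV"
    hence "1 \<notin> K" using li_UNIV by blast
    thus "K = M" using M K by blast
  qed
  thus ?thesis using M by blast
qed

lemma maximal_ideal_alt:
  assumes "maximal_ideal P" "two_sided_ideal T" "P \<subseteq> T" "T \<noteq> P"
  shows "T = UNIV"
  using assms unfolding maximal_ideal_def by blast

lemma maximal_1: "maximal_ideal P \<Longrightarrow> 1 \<notin> P"
  unfolding maximal_ideal_def using tsi_UNIV by blast

lemma max_tsi: "maximal_ideal P \<Longrightarrow> two_sided_ideal P"
  unfolding maximal_ideal_def by (elim conjE)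

lemma maximal_prime:
  fixes P :: "'a::ring_1 set"
  assumes P: "maximal_ideal P" and xy: "\<forall>r. x * r * y \<in> P"
  shows "x \<in> P \<or> y \<in> P"
proof (rule ccontr)
  assume nx: "\<not> (x \<in> P \<or> y \<in> P)"
  have PI: "two_sided_ideal P" using P maximal_ideal_def by blast
  let ?T = "{z. \<forall>r. z * r * y \<in> P}"
  have T: "two_sided_ideal ?T"
    unfolding two_sided_ideal_def
  proof (intro conjI ballI allI)
    show "0 \<in> ?T" using tsi_0[OF PI] by simp
    fix a b assume "a \<in> ?T" "b \<in> ?T"
    thus "a + b \<in> ?T" using tsi_add[OF PI] by (simp add: distrib_right)
  next
    fix a assume "a \<in> ?T" thus "- a \<in> ?T" using tsi_neg[OF PI] by simp
  next
    fix a r assume a: "a \<in> ?T"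
    show "r * a \<in> ?T" using a tsi_mult[OF PI] by (simp add: mult.assoc)
    show "a * r \<in> ?T" using a by (simp add: mult.assoc) (metis mult.assoc)
  qed
  have "P \<subseteq> ?T" using tsi_mult[OF PI] by (auto simp: mult.assoc)
  moreover have "x \<in> ?T" using xy by simp
  ultimately have "?T = UNIV" using maximal_ideal_alt[OF P T] nx by blast
  hence "1 * 1 * y \<in> P" by blast
  thus False using nx by simp
qed

lemma maximal_comax:
  fixes P :: "'a::ring_1 set"
  assumes P: "maximal_ideal P" and Q: "maximal_ideal Q" and ne: "P \<noteq> Q"
  shows "\<exists>p\<in>P. \<exists>q\<in>Q. p + q = 1"
proof -
  have PI: "two_sided_ideal P" and QI: "two_sided_ideal Q" using P Q maximal_ideal_def by blast+
  let ?S = "{p + q | p q. p \<in> P \<and> q \<in> Q}"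
  have S: "two_sided_ideal ?S"
    unfolding two_sided_ideal_def
  proof (intro conjI ballI allI)
    show "0 \<in> ?S" using tsi_0[OF PI] tsi_0[OF QI] by force
    fix a b assume "a \<in> ?S" "b \<in> ?S"
    then obtain p q p' q' where "a = p + q" "b = p' + q'" "p \<in> P" "q \<in> Q" "p' \<in> P" "q' \<in> Q" by blast
    moreover have "a + b = (p+p') + (q+q')" using \<open>a = p + q\<close> \<open>b = p' + q'\<close> by (simp add: algebra_simps)
    ultimately show "a + b \<in> ?S" using tsi_add[OF PI, of p p'] tsi_add[OF QI, of q q'] by blast
  next
    fix a assume "a \<in> ?S"
    then obtain p q where "a = p + q" "p \<in> P" "q \<in> Q" by blast
    moreover have "- a = (-p) + (-q)" using \<open>a = p + q\<close> by simp
    ultimately show "- a \<in> ?S" using tsi_neg[OF PI, of p] tsi_neg[OF QI, of q] by blast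
  next
    fix a r assume "a \<in> ?S"
    then obtain p q where pq: "a = p + q" "p \<in> P" "q \<in> Q" by blast
    have "r * a = r*p + r*q" "a * r = p*r + q*r" using pq by (simp_all add: algebra_simps)
    thus "r * a \<in> ?S" "a * r \<in> ?S" using pq tsi_mult[OF PI, of p r] tsi_mult[OF QI, of q r] by blast+
  qed
  have sub: "P \<subseteq> ?S" using tsi_0[OF QI] by force
  have "?S \<noteq> P"
  proof
    assume "?S = P"
    hence "Q \<subseteq> P" using tsi_0[OF PI] by force
    thus False using Q P ne unfolding maximal_ideal_def by blast
  qed
  hence "?S = UNIV" using maximal_ideal_alt[OF P S sub] by blast
  hence "1 \<in> ?S" by blast
  then obtain p q where pq: "1 = p + q" "p \<in> P" "q \<in> Q" by blast
  show ?thesis using pq by (intro bexI[of _ p] bexI[of _ q]) auto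
qed



lemma jac_left: "left_ideal (jacobson :: 'a::ring_1 set)"
proof -
  have h: "\<forall>M\<in>{M::'a set. maximal_left_ideal M}. left_ideal M"
    unfolding maximal_left_ideal_def by blast
  show ?thesis unfolding jacobson_def left_ideal_def
  proof (intro conjI ballI allI)
    show "0 \<in> \<Inter>{M::'a set. maximal_left_ideal M}" using h li_0 by blast
    fix x y assume "x \<in> \<Inter>{M::'a set. maximal_left_ideal M}" "y \<in> \<Inter>{M::'a set. maximal_left_ideal M}"
    thus "x + y \<in> \<Inter>{M::'a set. maximal_left_ideal M}" using h li_add by blast
  next
    fix x assume "x \<in> \<Inter>{M::'a set. maximal_left_ideal M}"
    thus "- x \<in> \<Inter>{M::'a set. maximal_left_ideal M}" using h li_neg by blast
  next
    fix x r assume "x \<in> \<Inter>{M::'a set. maximal_left_ideal M}"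
    thus "r * x \<in> \<Inter>{M::'a set. maximal_left_ideal M}" using h li_mult by blast
  qed
qed

lemma colon_maximal:
  fixes M :: "'a::ring_1 set"
  assumes M: "maximal_left_ideal M" and ne: "{r. r * s \<in> M} \<noteq> UNIV"
  shows "maximal_left_ideal {r. r * s \<in> M}"
proof -
  have HML: "left_ideal M" using M maximal_left_ideal_def by blast
  let ?C = "{r. r * s \<in> M}"
  have C: "left_ideal ?C"
    unfolding left_ideal_def
  proof (intro conjI ballI allI)
    show "0 \<in> ?C" using li_0[OF HML] by simp
    fix a b assume "a \<in> ?C" "b \<in> ?C" thus "a + b \<in> ?C" using li_add[OF HML] by (simp add: distrib_right)
  next
    fix a assume "a \<in> ?C" thus "- a \<in> ?C" using li_neg[OF HML] by simp
  next
    fix a r assume "a \<in> ?C" thus "r * a \<in> ?C" using li_mult[OF HML] by (simp add: mult.assoc)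
  qed
  show ?thesis
    unfolding maximal_left_ideal_def
  proof (intro conjI allI impI)
    show "left_ideal ?C" "?C \<noteq> UNIV" by fact+
    fix I assume I: "left_ideal I \<and> ?C \<subseteq> I \<and> I \<noteq> UNIV"
    show "I = ?C"
    proof (rule ccontr)
      assume "I \<noteq> ?C"
      then obtain i where i: "i \<in> I" "i * s \<notin> M" using I by blast
      let ?L = "{m + r * (i * s) | m r. m \<in> M}"
      have L: "left_ideal ?L"
        unfolding left_ideal_def
      proof (intro conjI ballI allI)
        have "0 = 0 + 0 * (i * s)" by simp
        thus "0 \<in> ?L" using li_0[OF HML] by blast
        fix a b assume "a \<in> ?L" "b \<in> ?L"
        then obtain m r m2 r2 where mr: "a = m + r * (i * s)" "b = m2 + r2 * (i * s)" "m \<in> M" "m2 \<in> M" by blast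
        have "a + b = (m + m2) + (r + r2) * (i * s)" using mr by (simp add: algebra_simps)
        thus "a + b \<in> ?L" using li_add[OF HML, of m m2] mr by blast
      next
        fix a assume "a \<in> ?L"
        then obtain m r where mr: "a = m + r * (i * s)" "m \<in> M" by blast
        have "- a = (- m) + (- r) * (i * s)" using mr by simp
        thus "- a \<in> ?L" using li_neg[OF HML, of m] mr by blast
      next
        fix a t assume "a \<in> ?L"
        then obtain m r where mr: "a = m + r * (i * s)" "m \<in> M" by blast
        have "t * a = (t * m) + (t * r) * (i * s)" using mr by (simp add: algebra_simps)
        thus "t * a \<in> ?L" using li_mult[OF HML, of m t] mr by blast
      qed
      have sub: "M \<subseteq> ?L"
      proof
        fix m assume "m \<in> M"
        moreover have "m = m + 0 * (i * s)" by simp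
        ultimately show "m \<in> ?L" by blast
      qed
      have "i * s = 0 + 1 * (i * s)" by simp
      hence "i * s \<in> ?L" using li_0[OF HML] by blast
      hence "?L \<noteq> M" using i by blast
      hence LU: "?L = UNIV" using M L sub unfolding maximal_left_ideal_def by blast
      have "t \<in> I" for t
      proof -
        have "t * s \<in> ?L" using LU by blast
        then obtain m r where mr: "t * s = m + r * (i * s)" "m \<in> M" by blast
        have "(t - r * i) * s = m" using mr by (simp add: algebra_simps)
        hence "t - r * i \<in> I" using mr I by auto
        moreover have "r * i \<in> I" using I i li_mult by blast
        ultimately have "(t - r*i) + r * i \<in> I" using I li_add by blast
        thus ?thesis by simp
      qed
      thus False using I by blast
    qed
  qed
qed

lemma jac_right:
  fixes x :: "'a::ring_1"
  assumes x: "x \<in> jacobson"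
  shows "x * s \<in> jacobson"
  unfolding jacobson_def
proof
  fix M :: "'a set" assume "M \<in> {M. maximal_left_ideal M}"
  hence M: "maximal_left_ideal M" by simp
  show "x * s \<in> M"
  proof (cases "{r. r * s \<in> M} = UNIV")
    case True thus ?thesis by blast
  next
    case False
    hence "maximal_left_ideal {r. r * s \<in> M}" using colon_maximal M by blast
    hence "x \<in> {r. r * s \<in> M}" using x unfolding jacobson_def by blast
    thus ?thesis by simp
  qed
qed

lemma jac_sub:
  fixes P :: "'a::ring_1 set"
  assumes P: "maximal_ideal P"
  shows "jacobson \<subseteq> P"
proof -
  have PI: "two_sided_ideal P" using P maximal_ideal_def by blast
  have "left_ideal P" using PI unfolding two_sided_ideal_def left_ideal_def by blast
  then obtain M where M: "maximal_left_ideal M" "P \<subseteq> M"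
    using exists_maximal_left_ideal maximal_1[OF P] by blast
  have HML: "left_ideal M" and MU: "M \<noteq> UNIV" using M maximal_left_ideal_def by blast+
  let ?A = "{x. \<forall>r. x * r \<in> M}"
  have A: "two_sided_ideal ?A"
    unfolding two_sided_ideal_def
  proof (intro conjI ballI allI)
    show "0 \<in> ?A" using li_0[OF HML] by simp
    fix a b assume "a \<in> ?A" "b \<in> ?A" thus "a + b \<in> ?A" using li_add[OF HML] by (simp add: distrib_right)
  next
    fix a assume "a \<in> ?A" thus "- a \<in> ?A" using li_neg[OF HML] by simp
  next
    fix a r assume a: "a \<in> ?A"
    show "r * a \<in> ?A" using a li_mult[OF HML] by (simp add: mult.assoc)
    show "a * r \<in> ?A" using a by (simp add: mult.assoc)
  qed
  have "P \<subseteq> ?A" using PI M(2) tsi_mult by blast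
  moreover have "?A \<noteq> UNIV"
  proof
    assume "?A = UNIV" hence "1 * 1 \<in> M" by blast
    thus False using li_UNIV[OF HML] MU by simp
  qed
  ultimately have AP: "?A = P" using P A unfolding maximal_ideal_def by blast
  have "jacobson \<subseteq> ?A"
  proof
    fix x :: 'a assume "x \<in> jacobson"
    hence "\<forall>r. x * r \<in> jacobson" using jac_right by blast
    thus "x \<in> ?A" using M(1) unfolding jacobson_def by blast
  qed
  thus ?thesis using AP by simp
qed



lemma RaR_add1:
  fixes a :: "'a::ring_1"
  assumes "x \<in> RaR a" shows "x + t * a * u \<in> RaR a"
proof -
  obtain n :: nat and r s where x: "x = (\<Sum>i<n. r i * a * s i)" using assms unfolding RaR_def by auto
  have c: "(\<Sum>i<n. (r(n:=t)) i * a * (s(n:=u)) i) = (\<Sum>i<n. r i * a * s i)"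
    by (rule sum.cong) auto
  have "x + t * a * u = (\<Sum>i<Suc n. (r(n:=t)) i * a * (s(n:=u)) i)"
    unfolding x sum.lessThan_Suc c by simp
  thus ?thesis unfolding RaR_def
    by (intro CollectI exI[of _ "Suc n"] exI[of _ "r(n:=t)"] exI[of _ "s(n:=u)"])
qed

lemma RaR_add:
  fixes a :: "'a::ring_1"
  assumes "x \<in> RaR a" "y \<in> RaR a" shows "x + y \<in> RaR a"
proof -
  obtain m :: nat and r s where y: "y = (\<Sum>i<m. r i * a * s i)" using assms unfolding RaR_def by auto
  have "x + (\<Sum>i<m. r i * a * s i) \<in> RaR a" for m :: nat
  proof (induction m)
    case 0 thus ?case using assms by simp
  next
    case (Suc m)
    have "x + (\<Sum>i<Suc m. r i * a * s i) = (x + (\<Sum>i<m. r i * a * s i)) + r m * a * s m"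
      by (simp add: algebra_simps)
    thus ?case using RaR_add1[OF Suc, of "r m" "s m"] by (simp add: add.assoc)
  qed
  thus ?thesis using y by simp
qed

lemma RaR_ideal: "two_sided_ideal (RaR (a::'a::ring_1))"
  unfolding two_sided_ideal_def
proof (intro conjI ballI allI)
  show "0 \<in> RaR a" unfolding RaR_def by (rule CollectI, rule exI[of _ 0], simp)
  fix x y assume "x \<in> RaR a" "y \<in> RaR a" thus "x + y \<in> RaR a" by (rule RaR_add)
next
  fix x assume "x \<in> RaR a"
  then obtain n :: nat and r s where x: "x = (\<Sum>i<n. r i * a * s i)" unfolding RaR_def by auto
  have "- x = (\<Sum>i<n. (\<lambda>i. - r i) i * a * s i)" unfolding x by (simp add: sum_negf)
  thus "- x \<in> RaR a" unfolding RaR_def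
    by (intro CollectI exI[of _ n] exI[of _ "\<lambda>i. - r i"] exI[of _ s]) simp
next
  fix x t assume "x \<in> RaR a"
  then obtain n :: nat and r s where x: "x = (\<Sum>i<n. r i * a * s i)" unfolding RaR_def by auto
  have "t * x = (\<Sum>i<n. (\<lambda>i. t * r i) i * a * s i)" unfolding x by (simp add: sum_distrib_left mult.assoc)
  thus "t * x \<in> RaR a" unfolding RaR_def
    by (intro CollectI exI[of _ n] exI[of _ "\<lambda>i. t * r i"] exI[of _ s]) simp
  have "x * t = (\<Sum>i<n. r i * a * (\<lambda>i. s i * t) i)" unfolding x by (simp add: sum_distrib_right mult.assoc)
  thus "x * t \<in> RaR a" unfolding RaR_def
    by (intro CollectI exI[of _ n] exI[of _ r] exI[of _ "\<lambda>i. s i * t"]) simp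
qed

lemma RaR_self: "a \<in> RaR (a::'a::ring_1)"
proof -
  show ?thesis unfolding RaR_def
    by (rule CollectI, rule exI[of _ "Suc 0"], rule exI[of _ "\<lambda>_. 1"], rule exI[of _ "\<lambda>_. 1"]) simp
qed

lemma RaR_sub:
  fixes a :: "'a::ring_1"
  assumes I: "two_sided_ideal I" and a: "a \<in> I" shows "RaR a \<subseteq> I"
proof
  fix x assume "x \<in> RaR a"
  then obtain n :: nat and r s where x: "x = (\<Sum>i<n. r i * a * s i)" unfolding RaR_def by auto
  have "(\<Sum>i<n. r i * a * s i) \<in> I" for n :: nat
  proof (induction n)
    case 0 thus ?case using tsi_0[OF I] by simp
  next
    case (Suc n)
    have "r n * a * s n \<in> I" using tsi_mult[OF I] a by blast
    thus ?case using tsi_add[OF I Suc] by simp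
  qed
  thus "x \<in> I" using x by simp
qed

lemma Velem_iff: "P \<in> Velem x \<longleftrightarrow> maximal_ideal P \<and> x \<in> P"
  unfolding Velem_def V_def MaxSpec_def
proof
  assume "P \<in> {P \<in> {M. maximal_ideal M}. RaR x \<subseteq> P}"
  thus "maximal_ideal P \<and> x \<in> P" using RaR_self by blast
next
  assume h: "maximal_ideal P \<and> x \<in> P"
  hence "RaR x \<subseteq> P" using RaR_sub[OF max_tsi] by blast
  thus "P \<in> {P \<in> {M. maximal_ideal M}. RaR x \<subseteq> P}" using h by blast
qed

lemma full_iff: "full (u::'a::ring_1) \<longleftrightarrow> (\<forall>P. maximal_ideal P \<longrightarrow> u \<notin> P)"
proof
  assume "full u"
  thus "\<forall>P. maximal_ideal P \<longrightarrow> u \<notin> P" unfolding full_def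
    using RaR_sub[OF max_tsi] maximal_1 tsi_UNIV by blast
next
  assume h: "\<forall>P. maximal_ideal P \<longrightarrow> u \<notin> P"
  show "full u"
  proof (rule ccontr)
    assume "\<not> full u"
    hence "1 \<notin> RaR u" unfolding full_def using tsi_UNIV RaR_ideal by blast
    then obtain P where "maximal_ideal P" "RaR u \<subseteq> P" using exists_maximal_ideal RaR_ideal by blast
    thus False using h RaR_self by blast
  qed
qed

definition good :: "'a::ring_1 \<Rightarrow> bool" where
  "good e \<longleftrightarrow> {e * r * (1 - e) | r. True} \<subseteq> jacobson"

lemma good_iff: "good e \<longleftrightarrow> (\<forall>r. e * r * (1 - e) \<in> jacobson)"
  unfolding good_def by blast

lemma good_dich:
  assumes "good e" "maximal_ideal P"
  shows "e \<in> P \<longleftrightarrow> 1 - e \<notin> P"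
proof -
  have PI: "two_sided_ideal P" using max_tsi[OF assms(2)] .
  have "jacobson \<subseteq> P" using jac_sub[OF assms(2)] .
  hence "\<forall>r. e * r * (1 - e) \<in> P" using assms(1) unfolding good_iff by blast
  hence A: "e \<in> P \<or> 1 - e \<in> P" using maximal_prime[OF assms(2)] by blast
  have B: "\<not> (e \<in> P \<and> 1 - e \<in> P)"
  proof
    assume h: "e \<in> P \<and> 1 - e \<in> P"
    have "e + (1 - e) \<in> P" using h by (intro tsi_add[OF PI]) auto
    thus False using maximal_1[OF assms(2)] by simp
  qed
  from A B show ?thesis by argo
qed

lemma jac_add: "x \<in> jacobson \<Longrightarrow> y \<in> jacobson \<Longrightarrow> x + y \<in> jacobson"
  using li_add jac_left by blast
lemma jac_lmult: "x \<in> jacobson \<Longrightarrow> r * x \<in> jacobson"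
  using li_mult jac_left by blast

lemma good_mult:
  assumes "good e1" "good e2" shows "good (e1 * e2)"
  unfolding good_iff
proof
  fix r
  have eq: "e1 * e2 * r * (1 - e1 * e2) = e1 * (e2 * r) * (1 - e1) + e1 * (e2 * (r * e1) * (1 - e2))"
    by (simp add: algebra_simps)
  have a: "e1 * (e2 * r) * (1 - e1) \<in> jacobson" using assms(1) good_iff by blast
  have b: "e2 * (r * e1) * (1 - e2) \<in> jacobson" using assms(2) good_iff by blast
  show "e1 * e2 * r * (1 - e1 * e2) \<in> jacobson"
    unfolding eq by (rule jac_add[OF a jac_lmult[OF b]])
qed

lemma good_join:
  assumes "good e1" "good e2" shows "good (e1 + e2 - e1 * e2)"
  unfolding good_iff
proof
  fix r
  have eq: "(e1 + e2 - e1 * e2) * r * (1 - (e1 + e2 - e1 * e2)) =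
     (e1 * r * (1 - e1)) * (1 - e2) + (1 - e1) * (e2 * (r * (1 - e1)) * (1 - e2))"
    by (simp add: algebra_simps)
  have a: "e1 * r * (1 - e1) \<in> jacobson" using assms(1) good_iff by blast
  have b: "e2 * (r * (1 - e1)) * (1 - e2) \<in> jacobson" using assms(2) good_iff by blast
  show "(e1 + e2 - e1 * e2) * r * (1 - (e1 + e2 - e1 * e2)) \<in> jacobson"
    unfolding eq by (rule jac_add[OF jac_right[OF a] jac_lmult[OF b]])
qed

lemma good_mult_mem:
  assumes "good e1" "good e2" "maximal_ideal P"
  shows "e1 * e2 \<in> P \<longleftrightarrow> e1 \<in> P \<or> e2 \<in> P"
proof -
  have PI: "two_sided_ideal P" using max_tsi[OF assms(3)] .
  show ?thesis
  proof
    assume h: "e1 * e2 \<in> P"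
    show "e1 \<in> P \<or> e2 \<in> P"
    proof (rule ccontr)
      assume "\<not> (e1 \<in> P \<or> e2 \<in> P)"
      hence a: "1 - e1 \<in> P" and b: "1 - e2 \<in> P"
        using good_dich[OF assms(1,3)] good_dich[OF assms(2,3)] by auto
      have c: "e1 * (1 - e2) \<in> P" by (rule tsi_lmult[OF PI b])
      have "e1 * e2 + (1 - e1) + e1 * (1 - e2) \<in> P"
        by (rule tsi_add[OF PI tsi_add[OF PI h a] c])
      moreover have "e1 * e2 + (1 - e1) + e1 * (1 - e2) = 1" by (simp add: algebra_simps)
      ultimately show False using maximal_1[OF assms(3)] by simp
    qed
  next
    assume "e1 \<in> P \<or> e2 \<in> P"
    thus "e1 * e2 \<in> P" using tsi_lmult[OF PI] tsi_rmult[OF PI] by blast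
  qed
qed

lemma good_join_mem:
  assumes "good e1" "good e2" "maximal_ideal P"
  shows "e1 + e2 - e1 * e2 \<in> P \<longleftrightarrow> e1 \<in> P \<and> e2 \<in> P"
proof -
  have PI: "two_sided_ideal P" using max_tsi[OF assms(3)] .
  have eq: "(e1 + e2 - e1 * e2) + (1 - e1) * (1 - e2) = 1" by (simp add: algebra_simps)
  show ?thesis
  proof
    assume h: "e1 + e2 - e1 * e2 \<in> P"
    show "e1 \<in> P \<and> e2 \<in> P"
    proof (rule ccontr)
      assume "\<not> (e1 \<in> P \<and> e2 \<in> P)"
      hence "1 - e1 \<in> P \<or> 1 - e2 \<in> P"
        using good_dich[OF assms(1,3)] good_dich[OF assms(2,3)] by auto
      hence "(1 - e1) * (1 - e2) \<in> P" using tsi_lmult[OF PI] tsi_rmult[OF PI] by blast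
      hence "(e1 + e2 - e1 * e2) + (1 - e1) * (1 - e2) \<in> P" by (rule tsi_add[OF PI h])
      thus False using maximal_1[OF assms(3)] eq by simp
    qed
  next
    assume h: "e1 \<in> P \<and> e2 \<in> P"
    have "e1 * e2 \<in> P" using h tsi_rmult[OF PI] by blast
    thus "e1 + e2 - e1 * e2 \<in> P" using h by (intro tsi_diff[OF PI] tsi_add[OF PI]) auto
  qed
qed

lemma good_union:
  fixes F :: "'a::ring_1 set"
  assumes "finite F" "\<forall>e\<in>F. good e"
  shows "\<exists>g. good g \<and> (\<forall>P. maximal_ideal P \<longrightarrow> (g \<in> P \<longleftrightarrow> (\<exists>e\<in>F. e \<in> P)))"
  using assms
proof (induction F rule: finite_induct)
  case empty
  have "good (1::'a)" unfolding good_iff using li_0[OF jac_left] by simp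
  thus ?case using maximal_1 by blast
next
  case (insert x F)
  then obtain g where g: "good g" "\<forall>P. maximal_ideal P \<longrightarrow> (g \<in> P \<longleftrightarrow> (\<exists>e\<in>F. e \<in> P))" by auto
  have x: "good x" using insert by simp
  show ?case
  proof (intro exI conjI allI impI)
    show "good (x * g)" by (rule good_mult[OF x g(1)])
    fix P :: "'a set" assume P: "maximal_ideal P"
    show "x * g \<in> P \<longleftrightarrow> (\<exists>e\<in>insert x F. e \<in> P)"
      using good_mult_mem[OF x g(1) P] g(2) P by auto
  qed
qed

lemma good_inter:
  fixes F :: "'a::ring_1 set"
  assumes "finite F" "\<forall>e\<in>F. good e"
  shows "\<exists>g. good g \<and> (\<forall>P. maximal_ideal P \<longrightarrow> (g \<in> P \<longleftrightarrow> (\<forall>e\<in>F. e \<in> P)))"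
  using assms
proof (induction F rule: finite_induct)
  case empty
  have "good (0::'a)" unfolding good_iff using li_0[OF jac_left] by simp
  thus ?case using max_tsi tsi_0 by blast
next
  case (insert x F)
  then obtain g where g: "good g" "\<forall>P. maximal_ideal P \<longrightarrow> (g \<in> P \<longleftrightarrow> (\<forall>e\<in>F. e \<in> P))" by auto
  have x: "good x" using insert by simp
  show ?case
  proof (intro exI conjI allI impI)
    show "good (x + g - x * g)" by (rule good_join[OF x g(1)])
    fix P :: "'a set" assume P: "maximal_ideal P"
    show "x + g - x * g \<in> P \<longleftrightarrow> (\<forall>e\<in>insert x F. e \<in> P)"
      using good_join_mem[OF x g(1) P] g(2) P by auto
  qed
qed



lemma MaxSpec_iff: "P \<in> MaxSpec \<longleftrightarrow> maximal_ideal P"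
  unfolding MaxSpec_def by simp

lemma V_iff: "P \<in> V I \<longleftrightarrow> maximal_ideal P \<and> I \<subseteq> P"
  unfolding V_def MaxSpec_def by simp

lemma open_basic: "two_sided_ideal I \<Longrightarrow> openin max_topology (MaxSpec - V I)"
  unfolding max_topology_def openin_topology_generated_by_iff
  by (rule generate_topology_on.Basis) blast

lemma ideal_UNIV: "two_sided_ideal (UNIV::'a::ring_1 set)"
  unfolding two_sided_ideal_def by (intro conjI ballI allI) auto

lemma ideal_0: "two_sided_ideal {0::'a::ring_1}"
  unfolding two_sided_ideal_def by (intro conjI ballI allI) auto

lemma topspace_max: "topspace (max_topology :: 'a::ring_1 set topology) = MaxSpec"
proof -
  have "MaxSpec - V (UNIV::'a set) = MaxSpec"
    using V_iff maximal_1 by blast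
  hence "MaxSpec \<in> {MaxSpec - V I | I::'a set. two_sided_ideal I}" using ideal_UNIV by force
  thus ?thesis unfolding max_topology_def topology_generated_by_topspace by blast
qed

definition gen :: "'a::ring_1 set \<Rightarrow> 'a set" where
  "gen S = \<Inter>{I. two_sided_ideal I \<and> S \<subseteq> I}"

lemma Inter_ideal:
  assumes h: "\<forall>I\<in>F. two_sided_ideal I" shows "two_sided_ideal (\<Inter>F)"
  unfolding two_sided_ideal_def
proof (intro conjI ballI allI)
  show "0 \<in> \<Inter>F" using h tsi_0 by blast
  fix x y assume "x \<in> \<Inter>F" "y \<in> \<Inter>F"
  thus "x + y \<in> \<Inter>F" using h tsi_add by blast
next
  fix x assume "x \<in> \<Inter>F"
  thus "- x \<in> \<Inter>F" using h tsi_neg by blast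
next
  fix x r assume "x \<in> \<Inter>F"
  thus "r * x \<in> \<Inter>F" "x * r \<in> \<Inter>F" using h tsi_lmult tsi_rmult by blast+
qed

lemma gen_ideal: "two_sided_ideal (gen S)"
  unfolding gen_def by (rule Inter_ideal) blast

lemma gen_sup: "S \<subseteq> gen S"
  unfolding gen_def by blast

lemma gen_least: "two_sided_ideal I \<Longrightarrow> S \<subseteq> I \<Longrightarrow> gen S \<subseteq> I"
  unfolding gen_def by blast

lemma gen_mono: "S \<subseteq> T \<Longrightarrow> gen S \<subseteq> gen T"
  unfolding gen_def by blast

lemma open_form:
  assumes "openin (max_topology :: 'a::ring_1 set topology) U"
  shows "\<exists>K. two_sided_ideal K \<and> U = MaxSpec - V K"
proof -
  have "generate_topology_on {MaxSpec - V I | I::'a set. two_sided_ideal I} U"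
    using assms unfolding max_topology_def openin_topology_generated_by_iff .
  thus ?thesis
  proof (induction rule: generate_topology_on.induct)
    case Empty
    have "MaxSpec - V {0::'a} = {}" using V_iff MaxSpec_iff max_tsi tsi_0 by blast
    thus ?case using ideal_0 by metis
  next
    case (Int a b)
    then obtain K1 K2 where K: "two_sided_ideal K1" "a = MaxSpec - V K1" "two_sided_ideal K2" "b = MaxSpec - V K2"
      by blast
    have "two_sided_ideal (\<Inter>{K1, K2})" using K by (intro Inter_ideal) blast
    hence "two_sided_ideal (K1 \<inter> K2)" by simp
    moreover have "MaxSpec - V (K1 \<inter> K2) = a \<inter> b"
    proof (rule set_eqI)
      fix P
      show "P \<in> MaxSpec - V (K1 \<inter> K2) \<longleftrightarrow> P \<in> a \<inter> b"
      proof (cases "maximal_ideal P")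
        case False thus ?thesis by (simp add: K(2) K(4) MaxSpec_iff)
      next
        case True
        have "K1 \<inter> K2 \<subseteq> P \<longleftrightarrow> K1 \<subseteq> P \<or> K2 \<subseteq> P"
        proof
          assume h: "K1 \<inter> K2 \<subseteq> P"
          show "K1 \<subseteq> P \<or> K2 \<subseteq> P"
          proof (rule ccontr)
            assume "\<not> (K1 \<subseteq> P \<or> K2 \<subseteq> P)"
            then obtain k1 k2 where k: "k1 \<in> K1" "k1 \<notin> P" "k2 \<in> K2" "k2 \<notin> P" by blast
            have "\<forall>r. k1 * r * k2 \<in> P"
            proof
              fix r
              have "k1 * r * k2 \<in> K1" by (rule tsi_rmult[OF K(1) tsi_rmult[OF K(1) k(1)]])
              moreover have "k1 * r * k2 \<in> K2" by (rule tsi_lmult[OF K(3) k(3)])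
              ultimately show "k1 * r * k2 \<in> P" using h by blast
            qed
            thus False using maximal_prime[OF True] k by blast
          qed
        qed blast
        thus ?thesis using True by (simp add: K(2) K(4) V_iff MaxSpec_iff)
      qed
    qed
    ultimately show ?case by metis
  next
    case (UN F)
    then obtain Kf where Kf: "\<forall>k\<in>F. two_sided_ideal (Kf k) \<and> k = MaxSpec - V (Kf k)" by metis
    let ?L = "gen (\<Union>k\<in>F. Kf k)"
    have "MaxSpec - V ?L = \<Union>F"
    proof (rule set_eqI)
      fix P
      show "P \<in> MaxSpec - V ?L \<longleftrightarrow> P \<in> \<Union>F"
      proof (cases "maximal_ideal P")
        case False
        have "P \<notin> \<Union>F"
        proof
          assume "P \<in> \<Union>F"
          then obtain k where "k \<in> F" "P \<in> k" by blast
          hence "P \<in> MaxSpec" using Kf by blast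
          thus False using False MaxSpec_iff by blast
        qed
        thus ?thesis using False by (simp add: MaxSpec_iff)
      next
        case True
        hence PI: "two_sided_ideal P" by (rule max_tsi)
        have iff: "?L \<subseteq> P \<longleftrightarrow> (\<forall>k\<in>F. Kf k \<subseteq> P)"
        proof
          assume h: "?L \<subseteq> P"
          show "\<forall>k\<in>F. Kf k \<subseteq> P" using h gen_sup[of "\<Union>k\<in>F. Kf k"] by blast
        next
          assume "\<forall>k\<in>F. Kf k \<subseteq> P"
          thus "?L \<subseteq> P" by (intro gen_least[OF PI] UN_least) blast
        qed
        have e: "P \<in> k \<longleftrightarrow> \<not> Kf k \<subseteq> P" if "k \<in> F" for k
        proof -
          have "k = MaxSpec - V (Kf k)" using Kf that by blast
          hence "P \<in> k \<longleftrightarrow> P \<in> MaxSpec - V (Kf k)" by (rule arg_cong[where f="\<lambda>X. P \<in> X"])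
          also have "\<dots> \<longleftrightarrow> \<not> Kf k \<subseteq> P" using True by (simp add: V_iff MaxSpec_iff)
          finally show ?thesis .
        qed
        have "P \<in> MaxSpec - V ?L \<longleftrightarrow> \<not> ?L \<subseteq> P" using True by (simp add: V_iff MaxSpec_iff)
        also have "\<dots> \<longleftrightarrow> (\<exists>k\<in>F. \<not> Kf k \<subseteq> P)" using iff by blast
        also have "\<dots> \<longleftrightarrow> P \<in> \<Union>F" using e by blast
        finally show ?thesis .
      qed
    qed
    thus ?case using gen_ideal by metis
  next
    case (Basis s) thus ?case by blast
  qed
qed

lemma compact_V:
  fixes I :: "'a::ring_1 set"
  assumes I: "two_sided_ideal I"
  shows "compactin max_topology (V I)"
  unfolding compactin_def
proof (intro conjI allI impI)
  show "V I \<subseteq> topspace max_topology" unfolding topspace_max V_def by blast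
  fix \<U> assume U: "(\<forall>U\<in>\<U>. openin max_topology U) \<and> V I \<subseteq> \<Union>\<U>"
  then obtain Kf where Kf: "\<forall>U\<in>\<U>. two_sided_ideal (Kf U) \<and> U = MaxSpec - V (Kf U)"
    using open_form by metis
  let ?G = "\<lambda>F. gen (I \<union> (\<Union>U\<in>F. Kf U))"
  let ?L = "\<Union>{?G F | F. finite F \<and> F \<subseteq> \<U>}"
  have L: "two_sided_ideal ?L"
    unfolding two_sided_ideal_def
  proof (intro conjI ballI allI)
    have "0 \<in> ?G {}" using tsi_0[OF gen_ideal] by blast
    thus "0 \<in> ?L" by blast
  next
    fix x y assume "x \<in> ?L" "y \<in> ?L"
    then obtain F1 F2 where F: "finite F1" "F1 \<subseteq> \<U>" "x \<in> ?G F1" "finite F2" "F2 \<subseteq> \<U>" "y \<in> ?G F2"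
      by blast
    have "?G F1 \<subseteq> ?G (F1 \<union> F2)" "?G F2 \<subseteq> ?G (F1 \<union> F2)" by (rule gen_mono, blast)+
    hence "x + y \<in> ?G (F1 \<union> F2)" using F tsi_add[OF gen_ideal] by blast
    moreover have "finite (F1 \<union> F2)" "F1 \<union> F2 \<subseteq> \<U>" using F by auto
    ultimately show "x + y \<in> ?L" by blast
  next
    fix x assume "x \<in> ?L"
    then obtain F where F: "finite F" "F \<subseteq> \<U>" "x \<in> ?G F" by blast
    hence "- x \<in> ?G F" using tsi_neg[OF gen_ideal] by blast
    thus "- x \<in> ?L" using F by blast
  next
    fix x r assume "x \<in> ?L"
    then obtain F where F: "finite F" "F \<subseteq> \<U>" "x \<in> ?G F" by blast
    hence "r * x \<in> ?G F" "x * r \<in> ?G F" using tsi_mult[OF gen_ideal] by blast+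
    thus "r * x \<in> ?L" "x * r \<in> ?L" using F by blast+
  qed
  have "1 \<in> ?L"
  proof (rule ccontr)
    assume "1 \<notin> ?L"
    then obtain P where P: "maximal_ideal P" "?L \<subseteq> P" using exists_maximal_ideal L by blast
    have mem: "?G F \<subseteq> ?L" if "finite F" "F \<subseteq> \<U>" for F
      using that by (intro Union_upper) blast
    have "I \<subseteq> I \<union> (\<Union>U'\<in>{}. Kf U')" by simp
    also have "\<dots> \<subseteq> ?G {}" by (rule gen_sup)
    also have "?G {} \<subseteq> ?L" by (rule mem) auto
    finally have "I \<subseteq> P" using P(2) by blast
    hence "P \<in> V I" using P(1) by (simp add: V_iff)
    hence "P \<in> \<Union>\<U>" using U by (elim conjE) (rule subsetD)
    then obtain U where UU: "U \<in> \<U>" "P \<in> U" by (rule UnionE)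
    have "Kf U \<subseteq> I \<union> (\<Union>U'\<in>{U}. Kf U')" by simp
    also have "\<dots> \<subseteq> ?G {U}" by (rule gen_sup)
    also have "?G {U} \<subseteq> ?L" using UU by (intro mem) auto
    finally have "Kf U \<subseteq> P" using P(2) by blast
    moreover have eqU: "U = MaxSpec - V (Kf U)" using Kf UU by blast
    have "P \<in> MaxSpec - V (Kf U)" using UU(2) eqU by metis
    ultimately show False using P(1) by (simp add: V_iff)
  qed
  then obtain F where F: "finite F" "F \<subseteq> \<U>" "1 \<in> ?G F" by blast
  have "V I \<subseteq> \<Union>F"
  proof
    fix P assume PV: "P \<in> V I"
    hence P: "maximal_ideal P" "I \<subseteq> P" by (simp_all add: V_iff)
    show "P \<in> \<Union>F"
    proof (rule ccontr)
      assume nP: "P \<notin> \<Union>F"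
      have "Kf U \<subseteq> P" if UF: "U \<in> F" for U
      proof (rule ccontr)
        assume nK: "\<not> Kf U \<subseteq> P"
        have "P \<in> MaxSpec - V (Kf U)" using P(1) nK by (simp add: V_iff MaxSpec_iff)
        moreover have "U = MaxSpec - V (Kf U)" using Kf F(2) UF by blast
        ultimately have "P \<in> U" by metis
        thus False using nP UF by blast
      qed
      hence "\<forall>U\<in>F. Kf U \<subseteq> P" by blast
      hence "?G F \<subseteq> P" by (intro gen_least[OF max_tsi[OF P(1)]] Un_least UN_least P(2)) blast
      thus False using F maximal_1[OF P(1)] by blast
    qed
  qed
  thus "\<exists>\<F>. finite \<F> \<and> \<F> \<subseteq> \<U> \<and> V I \<subseteq> \<Union>\<F>" using F by blast
qed



lemma RaR_sub_iff: "maximal_ideal P \<Longrightarrow> RaR x \<subseteq> P \<longleftrightarrow> x \<in> P"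
  using RaR_self RaR_sub[OF max_tsi] by blast

lemma Velem_good_open:
  assumes g: "good e"
  shows "openin max_topology (Velem e)"
proof -
  have "Velem e = MaxSpec - V (RaR (1 - e))"
  proof (rule set_eqI)
    fix P :: "'a set"
    show "P \<in> Velem e \<longleftrightarrow> P \<in> MaxSpec - V (RaR (1 - e))"
    proof (cases "maximal_ideal P")
      case True
      thus ?thesis using good_dich[OF g True] by (simp add: Velem_iff V_iff MaxSpec_iff RaR_sub_iff)
    next
      case False
      thus ?thesis by (simp add: Velem_iff V_iff MaxSpec_iff)
    qed
  qed
  thus ?thesis using open_basic[OF RaR_ideal] by simp
qed

lemma compl_open: "openin max_topology (MaxSpec - Velem (g::'a::ring_1))"
  unfolding Velem_def by (rule open_basic[OF RaR_ideal])

lemma fc_sep: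
  fixes a :: "'a::ring_1"
  assumes "feckly_clean_elem (1 - a)"
  shows "\<exists>e. good e \<and> (\<forall>P. maximal_ideal P \<longrightarrow> a \<in> P \<longrightarrow> e \<in> P) \<and> (\<forall>P. maximal_ideal P \<longrightarrow> 1 - a \<in> P \<longrightarrow> e \<notin> P)"
proof -
  obtain e u where eu: "full u" "1 - a = e + u" "{e * r * (1 - e) | r. True} \<subseteq> jacobson"
    using assms unfolding feckly_clean_elem_def by blast
  have g: "good e" using eu(3) unfolding good_def .
  have u: "u \<notin> P" if "maximal_ideal P" for P using eu(1) full_iff that by blast
  have ueq: "u = (1 - e) - a" "u = (1 - a) - e" using eu(2) by (simp_all add: algebra_simps)
  show ?thesis
  proof (intro exI conjI allI impI)
    show "good e" by fact
    fix P :: "'a set" assume P: "maximal_ideal P"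
    have PI: "two_sided_ideal P" by (rule max_tsi[OF P])
    { assume aP: "a \<in> P"
      show "e \<in> P"
      proof (rule ccontr)
        assume "e \<notin> P"
        hence "1 - e \<in> P" using good_dich[OF g P] by blast
        hence "(1 - e) - a \<in> P" using aP by (rule tsi_diff[OF PI])
        thus False using u[OF P] ueq(1) by simp
      qed }
    { assume aP: "1 - a \<in> P"
      show "e \<notin> P"
      proof
        assume eP: "e \<in> P"
        have "(1 - a) - e \<in> P" by (rule tsi_diff[OF PI aP eP])
        thus False using u[OF P] ueq(2) by simp
      qed }
  qed
qed

theorem corollary2p4:
  shows "feckly_clean_ring TYPE('a::ring_1) \<longleftrightarrow>
    (\<forall>A B. compactin (max_topology :: 'a set topology) A \<and> compactin max_topology B \<and> A \<inter> B = {}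
       \<longrightarrow> (\<exists>e::'a. A \<subseteq> Velem e \<and> B \<subseteq> Velem (1 - e) \<and>
              {e * r * (1 - e) | r. True} \<subseteq> jacobson))"
proof
  assume fc: "feckly_clean_ring TYPE('a::ring_1)"
  show "\<forall>A B. compactin (max_topology :: 'a set topology) A \<and> compactin max_topology B \<and> A \<inter> B = {}
       \<longrightarrow> (\<exists>e::'a. A \<subseteq> Velem e \<and> B \<subseteq> Velem (1 - e) \<and>
              {e * r * (1 - e) | r. True} \<subseteq> jacobson)"
  proof (intro allI impI)
    fix A B :: "'a set set"
    assume AB: "compactin max_topology A \<and> compactin max_topology B \<and> A \<inter> B = {}"
    have cA: "compactin max_topology A" and cB: "compactin max_topology B" and dis: "A \<inter> B = {}"
      using AB by simp_all
    have AM: "A \<subseteq> MaxSpec" using compactin_subset_topspace[OF cA] topspace_max by metis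
    have BM: "B \<subseteq> MaxSpec" using compactin_subset_topspace[OF cB] topspace_max by metis
    have sep: "\<exists>e. good e \<and> e \<in> P \<and> e \<notin> Q" if PA: "P \<in> A" and QB: "Q \<in> B" for P Q
    proof -
      have P: "maximal_ideal P" using AM PA MaxSpec_iff by blast
      have Q: "maximal_ideal Q" using BM QB MaxSpec_iff by blast
      have "P \<noteq> Q" using dis PA QB by blast
      then obtain p q where pq: "p \<in> P" "q \<in> Q" "p + q = 1" using maximal_comax[OF P Q] by blast
      have "\<forall>a::'a. feckly_clean_elem a" using fc unfolding feckly_clean_ring_def .
      hence "feckly_clean_elem (1 - p)" by (rule spec)
      hence ex: "\<exists>e. good e \<and> (\<forall>P. maximal_ideal P \<longrightarrow> p \<in> P \<longrightarrow> e \<in> P) \<and> (\<forall>P. maximal_ideal P \<longrightarrow> 1 - p \<in> P \<longrightarrow> e \<notin> P)"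
        by (rule fc_sep)
      obtain e where e: "good e" "\<forall>P. maximal_ideal P \<longrightarrow> p \<in> P \<longrightarrow> e \<in> P"
        "\<forall>P. maximal_ideal P \<longrightarrow> 1 - p \<in> P \<longrightarrow> e \<notin> P" using ex by metis
      have "1 - p = q" using pq(3) by (simp add: algebra_simps)
      hence "e \<notin> Q" using e(3) Q pq(2) by simp
      moreover have "e \<in> P" using e(2) P pq(1) by blast
      ultimately show ?thesis using e(1) by blast
    qed
    obtain e where e: "\<And>P Q. P \<in> A \<Longrightarrow> Q \<in> B \<Longrightarrow> good (e P Q) \<and> e P Q \<in> P \<and> e P Q \<notin> Q"
      using sep by metis
    have gQ: "\<exists>g. good g \<and> A \<subseteq> Velem g \<and> g \<notin> Q" if QB: "Q \<in> B" for Q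
    proof -
      let ?U = "(\<lambda>P. Velem (e P Q)) ` A"
      have op: "\<forall>U\<in>?U. openin max_topology U" using e QB Velem_good_open by blast
      have cov: "A \<subseteq> \<Union>?U"
      proof
        fix P assume PA: "P \<in> A"
        have "P \<in> Velem (e P Q)" using e[OF PA QB] AM PA by (simp add: Velem_iff MaxSpec_iff subset_iff)
        thus "P \<in> \<Union>?U" using PA by blast
      qed
      obtain F where F: "finite F" "F \<subseteq> ?U" "A \<subseteq> \<Union>F"
        using cA op cov unfolding compactin_def by meson
      obtain A' where A': "A' \<subseteq> A" "finite A'" "F = (\<lambda>P. Velem (e P Q)) ` A'"
        using finite_subset_image[OF F(1) F(2)] by blast
      have "\<forall>x\<in>(\<lambda>P. e P Q) ` A'. good x" using A'(1) e QB by blast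
      then obtain g where g: "good g" "\<forall>P. maximal_ideal P \<longrightarrow> (g \<in> P \<longleftrightarrow> (\<exists>x\<in>(\<lambda>P. e P Q) ` A'. x \<in> P))"
        using good_union[of "(\<lambda>P. e P Q) ` A'"] A'(2) by blast
      have "A \<subseteq> Velem g"
      proof
        fix P' assume P'A: "P' \<in> A"
        then obtain P where PA': "P \<in> A'" "P' \<in> Velem (e P Q)" using F(3) A'(3) by blast
        hence "maximal_ideal P'" "e P Q \<in> P'" by (simp_all add: Velem_iff)
        thus "P' \<in> Velem g" using g PA' by (simp add: Velem_iff) blast
      qed
      moreover have "g \<notin> Q"
      proof
        assume "g \<in> Q"
        moreover have Q: "maximal_ideal Q" using BM QB MaxSpec_iff by blast
        ultimately obtain P where "P \<in> A'" "e P Q \<in> Q" using g by blast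
        thus False using e A'(1) QB by blast
      qed
      ultimately show ?thesis using g(1) by blast
    qed
    obtain g where g: "\<And>Q. Q \<in> B \<Longrightarrow> good (g Q) \<and> A \<subseteq> Velem (g Q) \<and> g Q \<notin> Q"
      using gQ by metis
    let ?V = "(\<lambda>Q. MaxSpec - Velem (g Q)) ` B"
    have op: "\<forall>U\<in>?V. openin max_topology U" using compl_open by blast
    have cov: "B \<subseteq> \<Union>?V"
    proof
      fix Q assume QB: "Q \<in> B"
      have "Q \<in> MaxSpec - Velem (g Q)" using g[OF QB] BM QB by (simp add: Velem_iff subset_iff)
      thus "Q \<in> \<Union>?V" using QB by blast
    qed
    obtain F where F: "finite F" "F \<subseteq> ?V" "B \<subseteq> \<Union>F"
      using cB op cov unfolding compactin_def by meson
    obtain B' where B': "B' \<subseteq> B" "finite B'" "F = (\<lambda>Q. MaxSpec - Velem (g Q)) ` B'"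
      using finite_subset_image[OF F(1) F(2)] by blast
    have "\<forall>x\<in>g ` B'. good x" using B'(1) g by blast
    then obtain h where h: "good h" "\<forall>P. maximal_ideal P \<longrightarrow> (h \<in> P \<longleftrightarrow> (\<forall>x\<in>g ` B'. x \<in> P))"
      using good_inter[of "g ` B'"] B'(2) by blast
    have "A \<subseteq> Velem h"
    proof
      fix P assume PA: "P \<in> A"
      have P: "maximal_ideal P" using AM PA MaxSpec_iff by blast
      have "\<forall>x\<in>g ` B'. x \<in> P"
      proof
        fix x assume "x \<in> g ` B'"
        then obtain Q where "Q \<in> B'" "x = g Q" by blast
        hence "A \<subseteq> Velem x" using g B'(1) by blast
        thus "x \<in> P" using PA by (auto simp: Velem_iff)
      qed
      thus "P \<in> Velem h" using h P by (simp add: Velem_iff)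
    qed
    moreover have "B \<subseteq> Velem (1 - h)"
    proof
      fix Q' assume Q'B: "Q' \<in> B"
      have Q': "maximal_ideal Q'" using BM Q'B MaxSpec_iff by blast
      obtain Q where QB': "Q \<in> B'" "Q' \<in> MaxSpec - Velem (g Q)" using F(3) B'(3) Q'B by blast
      hence "g Q \<notin> Q'" using Q' by (simp add: Velem_iff)
      hence "h \<notin> Q'" using h Q' QB'(1) by blast
      hence "1 - h \<in> Q'" using good_dich[OF h(1) Q'] by blast
      thus "Q' \<in> Velem (1 - h)" using Q' by (simp add: Velem_iff)
    qed
    moreover have "{h * r * (1 - h) | r. True} \<subseteq> jacobson" using h(1) unfolding good_def .
    ultimately show "\<exists>e::'a. A \<subseteq> Velem e \<and> B \<subseteq> Velem (1 - e) \<and>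
              {e * r * (1 - e) | r. True} \<subseteq> jacobson" by blast
  qed
next
  assume H: "\<forall>A B. compactin (max_topology :: 'a set topology) A \<and> compactin max_topology B \<and> A \<inter> B = {}
       \<longrightarrow> (\<exists>e::'a. A \<subseteq> Velem e \<and> B \<subseteq> Velem (1 - e) \<and>
              {e * r * (1 - e) | r. True} \<subseteq> jacobson)"
  show "feckly_clean_ring TYPE('a::ring_1)"
    unfolding feckly_clean_ring_def
  proof
    fix a :: 'a
    have c1: "compactin (max_topology :: 'a set topology) (Velem (1 - a))"
      unfolding Velem_def by (rule compact_V[OF RaR_ideal])
    have c2: "compactin (max_topology :: 'a set topology) (Velem a)"
      unfolding Velem_def by (rule compact_V[OF RaR_ideal])
    have dis: "Velem (1 - a) \<inter> Velem a = {}"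
    proof (rule equals0I)
      fix P assume "P \<in> Velem (1 - a) \<inter> Velem a"
      hence P: "maximal_ideal P" "1 - a \<in> P" "a \<in> P" by (simp_all add: Velem_iff)
      have "(1 - a) + a \<in> P" by (rule tsi_add[OF max_tsi[OF P(1)] P(2) P(3)])
      thus False using maximal_1[OF P(1)] by simp
    qed
    obtain e where e: "Velem (1 - a) \<subseteq> Velem e" "Velem a \<subseteq> Velem (1 - e)"
      "{e * r * (1 - e) | r. True} \<subseteq> jacobson"
      using H c1 c2 dis by blast
    have g: "good e" using e(3) unfolding good_def .
    have "full (a - e)"
      unfolding full_iff
    proof (intro allI impI)
      fix P :: "'a set" assume P: "maximal_ideal P"
      have PI: "two_sided_ideal P" by (rule max_tsi[OF P])
      show "a - e \<notin> P"
      proof (cases "e \<in> P")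
        case True
        have "a \<notin> P"
        proof
          assume "a \<in> P"
          hence "P \<in> Velem (1 - e)" using e(2) P by (auto simp: Velem_iff)
          thus False using good_dich[OF g P] True by (simp add: Velem_iff)
        qed
        thus ?thesis using tsi_add[OF PI _ True, of "a - e"] by auto
      next
        case False
        hence "1 - e \<in> P" using good_dich[OF g P] by blast
        have "1 - a \<notin> P"
        proof
          assume "1 - a \<in> P"
          hence "P \<in> Velem e" using e(1) P by (auto simp: Velem_iff)
          thus False using False by (simp add: Velem_iff)
        qed
        moreover have "(1 - e) - (a - e) = 1 - a" by (simp add: algebra_simps)
        ultimately show ?thesis using tsi_diff[OF PI \<open>1 - e \<in> P\<close>, of "a - e"] by auto
      qed
    qed
    moreover have "a = e + (a - e)" by simp
    ultimately show "feckly_clean_elem a" unfolding feckly_clean_elem_def using e(3) by blast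
  qed
qed

end
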